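(* Let $\Omega \subset \mathbb{R}^N$ be closed and nonempty, let $p>1$, $\mu>0$, and let $f(x) := \frac{\mu}{p} d_\Omega(x)^p$. Then (1) $f$ is globally $p$-conditioned with constant $\mu$: for all $x\in\mathbb{R}^N$, $\frac{\mu}{p} d_{\operatorname{argmin} f}(x)^p \le f(x)-\inf f$; (2) $f$ is globally $p$-submetric regular with constant $\mu$: for all $x\in\mathbb{R}^N$ and all $x^*\in\partial_L f(x)$, $\mu\, d_{\operatorname{argmin} f}(x)^{p-1}\le \|x^*\|$.
   Context: For a closed set $S\subset\mathbb{R}^N$ (not necessarily convex), $d_S(x) := \inf_{y\in S}\|y-x\|$ (Euclidean norm). For $g:\mathbb{R}^N\to\mathbb{R}$, the Fréchet subdifferential $\partial_F g(x)$ is the set of $x^*$ with $\liminf_{y\to x} \frac{g(y)-g(x)-\langle x^*,y-x\rangle}{\|y-x\|}\ge 0$; the limiting subdifferential $\partial_L g(x)$ is the set of $x^*$ for which there exist $x_n\to x$ and $x_n^*\to x^*$ with $g(x_n)\to g(x)$ and $x_n^*\in\partial_F g(x_n)$. *)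

theory Defs
  imports "HOL-Analysis.Analysis"
begin

definition argmin_set :: "('a \<Rightarrow> real) \<Rightarrow> 'a set" where
  "argmin_set g = {x. \<forall>y. g x \<le> g y}"

definition frechet_subdiff :: "('a::real_inner \<Rightarrow> real) \<Rightarrow> 'a \<Rightarrow> 'a set" where
  "frechet_subdiff g x = {xs. Liminf (at x)
      (\<lambda>y. ereal ((g y - g x - inner xs (y - x)) / norm (y - x))) \<ge> 0}"

definition limiting_subdiff :: "('a::real_inner \<Rightarrow> real) \<Rightarrow> 'a \<Rightarrow> 'a set" where
  "limiting_subdiff g x = {xs. \<exists>u v. u \<longlonglongrightarrow> x \<and> v \<longlonglongrightarrow> xs \<and>
      (\<lambda>n. g (u n)) \<longlonglongrightarrow> g x \<and> (\<forall>n. v n \<in> frechet_subdiff g (u n))}"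

end

theory Submission
  imports Defs
begin

lemma frechet_bound:
  fixes \<Omega> :: "'a::euclidean_space set" and p \<mu> :: real and f :: "'a \<Rightarrow> real"
  assumes cl: "closed \<Omega>" and ne: "\<Omega> \<noteq> {}" and p: "p > 1" and mu: "\<mu> > 0"
    and fdef: "\<And>x. f x = \<mu> / p * infdist x \<Omega> powr p"
    and xs: "xs \<in> frechet_subdiff f x"
  shows "\<mu> * infdist x \<Omega> powr (p - 1) \<le> norm xs"
proof (cases "infdist x \<Omega> = 0")
  case True then show ?thesis by simp
next
  case False
  define d where "d = infdist x \<Omega>"
  have d: "d > 0" using False infdist_nonneg[of x \<Omega>] unfolding d_def by linarith
  obtain z where z: "z \<in> \<Omega>" "d = dist x z"
    using infdist_attains_inf[OF cl ne, of x] unfolding d_def by blast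
  define u where "u = (1 / d) *\<^sub>R (x - z)"
  have nu: "norm u = 1" using d z by (simp add: u_def dist_norm)
  have xzu: "x - z = d *\<^sub>R u" using d by (simp add: u_def)
  show ?thesis
  proof (rule field_le_epsilon)
    fix e :: real assume e: "0 < e"
    have L: "0 \<le> Liminf (at x) (\<lambda>y. ereal ((f y - f x - inner xs (y - x)) / norm (y - x)))"
      using xs unfolding frechet_subdiff_def by simp
    have ev1: "eventually (\<lambda>y. ereal (- e) < ereal ((f y - f x - inner xs (y - x)) / norm (y - x))) (at x)"
    proof -
      have "ereal (- e) < 0" using e by simp
      then show ?thesis using L unfolding le_Liminf_iff by blast
    qed
    define \<phi> where "\<phi> t = x + t *\<^sub>R u" for t :: real
    have "filterlim \<phi> (at x) (at_left 0)"
    proof (rule filterlim_atI)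
      have "(\<phi> \<longlongrightarrow> \<phi> 0) (at_left 0)" unfolding \<phi>_def by (intro tendsto_intros)
      then show "(\<phi> \<longlongrightarrow> x) (at_left 0)" by (simp add: \<phi>_def)
      show "\<forall>\<^sub>F t in at_left 0. \<phi> t \<noteq> x"
      proof -
        have "u \<noteq> 0" using nu by auto
        then show ?thesis by (simp add: \<phi>_def eventually_at_filter)
      qed
    qed
    from filterlim_iff[THEN iffD1, OF this, rule_format, OF ev1]
    have ev2: "eventually (\<lambda>t. - e < (f (\<phi> t) - f x - inner xs (\<phi> t - x)) / norm (\<phi> t - x)) (at_left 0)"
      by simp
    have ev3: "eventually (\<lambda>t. - d < t \<and> t < 0) (at_left 0)"
      using d by (intro eventually_conj eventually_at_leftI[of "-d"]) (auto simp: eventually_at_filter)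
    define h where "h t = - (\<mu> / p) * (((d + t) powr p - d powr p) / t) + inner xs u" for t
    have der: "((\<lambda>s. s powr p) has_real_derivative p * d powr (p - 1)) (at d)"
      using has_real_derivative_powr[OF d] .
    have "((\<lambda>t. ((d + t) powr p - d powr p) / t) \<longlongrightarrow> p * d powr (p - 1)) (at 0)"
      using DERIV_D[OF der] by simp
    then have "((\<lambda>t. ((d + t) powr p - d powr p) / t) \<longlongrightarrow> p * d powr (p - 1)) (at_left 0)"
      by (rule filterlim_mono) (auto simp: at_le)
    then have hlim: "(h \<longlongrightarrow> - (\<mu> / p) * (p * d powr (p - 1)) + inner xs u) (at_left 0)"
      unfolding h_def by (intro tendsto_intros)
    have ev4: "eventually (\<lambda>t. - e \<le> h t) (at_left 0)"
      using ev2 ev3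
    proof eventually_elim
      case (elim t)
      have nt: "norm (\<phi> t - x) = - t" using elim nu by (simp add: \<phi>_def)
      have "\<phi> t - z = (d + t) *\<^sub>R u" using xzu by (simp add: \<phi>_def algebra_simps)
      then have "dist (\<phi> t) z = d + t" using nu elim by (simp add: dist_norm)
      then have "infdist (\<phi> t) \<Omega> \<le> d + t" using infdist_le[OF z(1), of "\<phi> t"] by simp
      then have "infdist (\<phi> t) \<Omega> powr p \<le> (d + t) powr p"
        using p by (intro powr_mono2) (auto simp: infdist_nonneg)
      then have fle: "f (\<phi> t) \<le> \<mu> / p * (d + t) powr p"
        using mu p unfolding fdef by (intro mult_left_mono) auto
      have fx: "f x = \<mu> / p * d powr p" by (simp add: fdef d_def)
      have "- e < (f (\<phi> t) - f x - inner xs (\<phi> t - x)) / (- t)" using elim nt by simp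
      also have "\<dots> \<le> (\<mu> / p * (d + t) powr p - f x - inner xs (\<phi> t - x)) / (- t)"
        using elim fle by (intro divide_right_mono) auto
      also have "\<dots> = h t"
      proof -
        have "p \<noteq> 0" "t \<noteq> 0" using p elim by auto
        then show ?thesis using nu by (simp add: h_def fx \<phi>_def field_simps)
      qed
      finally show ?case by simp
    qed
    have "- e \<le> - (\<mu> / p) * (p * d powr (p - 1)) + inner xs u"
      by (rule tendsto_lowerbound[OF hlim ev4]) simp
    moreover have "inner xs u \<le> norm xs"
      using norm_cauchy_schwarz[of xs u] nu by simp
    ultimately show "\<mu> * infdist x \<Omega> powr (p - 1) \<le> norm xs + e"
      using p by (simp add: d_def)
  qed
qed

theorem proposition1:
  fixes \<Omega> :: "'a::euclidean_space set" and p \<mu> :: real and f :: "'a \<Rightarrow> real"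
  assumes "closed \<Omega>" and "\<Omega> \<noteq> {}" and "p > 1" and "\<mu> > 0"
    and "\<And>x. f x = \<mu> / p * infdist x \<Omega> powr p"
  shows "(\<forall>x. \<mu> / p * infdist x (argmin_set f) powr p \<le> f x - (INF y. f y))
       \<and> (\<forall>x xs. xs \<in> limiting_subdiff f x \<longrightarrow>
            \<mu> * infdist x (argmin_set f) powr (p - 1) \<le> norm xs)"
proof -
  note cl = assms(1) and ne = assms(2) and p = assms(3) and mu = assms(4) and fdef = assms(5)
  have fnn: "f y \<ge> 0" for y using p mu by (simp add: fdef)
  have f0: "f y = 0 \<longleftrightarrow> y \<in> \<Omega>" for y
    using p mu in_closed_iff_infdist_zero[OF cl ne, of y] by (simp add: fdef)
  obtain w where w: "w \<in> \<Omega>" using ne by blast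
  have am: "argmin_set f = \<Omega>"
  proof
    show "argmin_set f \<subseteq> \<Omega>"
    proof
      fix y assume "y \<in> argmin_set f"
      then have "f y \<le> f w" by (simp add: argmin_set_def)
      then have "f y = 0" using f0[of w] w fnn[of y] by simp
      then show "y \<in> \<Omega>" using f0 by simp
    qed
    show "\<Omega> \<subseteq> argmin_set f"
    proof
      fix y assume "y \<in> \<Omega>"
      then have "f y = 0" using f0 by simp
      then show "y \<in> argmin_set f" using fnn by (simp add: argmin_set_def)
    qed
  qed
  have bdd: "bdd_below (range f)" unfolding bdd_below_def using fnn by blast
  have inf0: "(INF y. f y) = 0"
  proof (rule antisym)
    have "(INF y. f y) \<le> f w" by (rule cINF_lower[OF bdd]) simp
    moreover have "f w = 0" using f0 w by blast
    ultimately show "(INF y. f y) \<le> 0" by linarith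
    show "0 \<le> (INF y. f y)" using fnn by (intro cINF_greatest) auto
  qed
  show ?thesis
  proof (intro conjI allI impI)
    fix x show "\<mu> / p * infdist x (argmin_set f) powr p \<le> f x - (INF y. f y)"
      using am inf0 fdef by simp
  next
    fix x xs assume "xs \<in> limiting_subdiff f x"
    then obtain u v where uv: "u \<longlonglongrightarrow> x" "v \<longlonglongrightarrow> xs" "\<And>n. v n \<in> frechet_subdiff f (u n)"
      unfolding limiting_subdiff_def by blast
    have bn: "\<mu> * infdist (u n) \<Omega> powr (p - 1) \<le> norm (v n)" for n
      by (rule frechet_bound[OF cl ne p mu fdef uv(3)])
    show "\<mu> * infdist x (argmin_set f) powr (p - 1) \<le> norm xs"
    proof (cases "infdist x \<Omega> = 0")
      case True then show ?thesis by (simp add: am)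
    next
      case False
      have l1: "(\<lambda>n. \<mu> * infdist (u n) \<Omega> powr (p - 1)) \<longlonglongrightarrow> \<mu> * infdist x \<Omega> powr (p - 1)"
        using False by (intro tendsto_intros uv(1)) auto
      have l2: "(\<lambda>n. norm (v n)) \<longlonglongrightarrow> norm xs" by (intro tendsto_intros uv(2))
      show ?thesis unfolding am using LIMSEQ_le[OF l1 l2] bn by blast
    qed
  qed
qed

end
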